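(* For $n,s\in\mathbb{N}$, $$\overline{H}_n(\overline{s})=\sum_{k=1}^n(-1)^{k-1}\binom{n}{k}\,{}_{s+1}F_s\left(\{\tfrac12\}^{s},1-k;\{\tfrac32\}^{s};-1\right).$$
   Context: $\mathbb{N}$ is the set of positive integers; $\overline{H}_n(\overline{s})=\sum_{k=0}^{n-1}\frac{(-1)^k}{(2k+1)^s}$ (odd alternating harmonic sum); $\{a\}^s$ denotes $a$ repeated $s$ times. ${}_{s+1}F_s(a_1,\ldots,a_{s+1};b_1,\ldots,b_s;x)=\sum_{i\geq 0}\frac{(a_1)_i\cdots(a_{s+1})_i}{(b_1)_i\cdots(b_s)_i}\frac{x^i}{i!}$, with $(a)_0=1$, $(a)_i=a(a+1)\cdots(a+i-1)$ for $i>0$ (a finite sum here since $1-k\leq 0$ is an integer). *)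

theory Defs
  imports "HOL-Analysis.Analysis"
begin

definition oddAltHarm :: "nat \<Rightarrow> nat \<Rightarrow> real" where
  "oddAltHarm n s = (\<Sum>k<n. (-1)^k / (2 * real k + 1) ^ s)"

definition hypergeom :: "real list \<Rightarrow> real list \<Rightarrow> real \<Rightarrow> real" where
  "hypergeom as bs x =
     (\<Sum>i. (\<Prod>a\<leftarrow>as. pochhammer a i) / (\<Prod>b\<leftarrow>bs. pochhammer b i) * x ^ i / fact i)"

end

theory Submission
  imports Defs
begin

lemma L1: "(\<Sum>j\<le>n. (-1)^j * real (n choose j) * real (j choose i)) = (if n = i then (-1)^i else 0)"
proof (cases "i \<le> n")
  case False
  then show ?thesis by (intro trans[OF sum.neutral]) auto
next
  case True
  have "(\<Sum>j\<le>n. (-1)^j * real (n choose j) * real (j choose i)) =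
        (\<Sum>j\<in>{i..n}. (-1)^j * real (n choose j) * real (j choose i))"
    by (rule sum.mono_neutral_right) (auto simp: binomial_eq_0)
  also have "\<dots> = (\<Sum>j\<in>{i..n}. (-1)^j * real (n choose i) * real ((n-i) choose (j-i)))"
    by (intro sum.cong refl) (simp add: choose_mult[symmetric] flip: of_nat_mult)
  also have "\<dots> = (\<Sum>t\<in>{0..n-i}. (-1)^(t+i) * real (n choose i) * real ((n-i) choose t))"
    using sum.shift_bounds_cl_nat_ivl[of "\<lambda>j. (-1)^j * real (n choose i) * real ((n-i) choose (j-i))" 0 i "n-i"] True
    by simp
  also have "\<dots> = (-1)^i * real (n choose i) * (\<Sum>t\<le>n-i. (-1)^t * real ((n-i) choose t))"
    by (simp add: sum_distrib_left atLeast0AtMost power_add mult_ac)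
  also have "\<dots> = (if n = i then (-1)^i else 0)"
  proof (cases "n = i")
    case False
    then have "n - i > 0" using True by simp
    from choose_alternating_sum[OF this, where 'a=real] False show ?thesis by simp
  qed simp
  finally show ?thesis .
qed

lemma L2: "(\<Sum>j<n. (-1)^j * real (n choose Suc j) * real (j choose i)) = (if i < n then (-1)^i else 0)"
proof (induction n)
  case 0
  then show ?case by simp
next
  case (Suc n)
  have "(\<Sum>j<Suc n. (-1)^j * real (Suc n choose Suc j) * real (j choose i)) =
     (\<Sum>j<Suc n. (-1)^j * real (n choose j) * real (j choose i)) +
     (\<Sum>j<Suc n. (-1)^j * real (n choose Suc j) * real (j choose i))"
    by (simp add: sum.distrib[symmetric] algebra_simps)
  also have "(\<Sum>j<Suc n. (-1)^j * real (n choose j) * real (j choose i)) = (if n = i then (-1)^i else 0)"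
    using L1[of n i] by (simp add: lessThan_Suc_atMost)
  also have "(\<Sum>j<Suc n. (-1)^j * real (n choose Suc j) * real (j choose i)) =
       (\<Sum>j<n. (-1)^j * real (n choose Suc j) * real (j choose i))"
    by simp
  also have "\<dots> = (if i < n then (-1)^i else 0)" by (rule Suc.IH)
  finally show ?case by auto
qed

lemma poch_half: "pochhammer (1/2::real) i / pochhammer (3/2) i = 1 / (2 * real i + 1)"
proof -
  have a: "pochhammer (1/2::real) (Suc i) = (1/2) * pochhammer (3/2) i"
    by (simp add: pochhammer_rec)
  have b: "pochhammer (1/2::real) (Suc i) = (1/2 + real i) * pochhammer (1/2) i"
    by (simp add: pochhammer_rec')
  have nz: "pochhammer (3/2::real) i \<noteq> 0"
    by (simp add: pochhammer_eq_0_iff)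
  from a b nz show ?thesis by (simp add: field_simps)
qed

lemma hyp: assumes "k \<ge> 1"
  shows "hypergeom (replicate s (1/2) @ [1 - real k]) (replicate s (3/2)) (-1)
     = (\<Sum>i<k. real (k-1 choose i) / (2 * real i + 1) ^ s)"
proof -
  have t: "(\<Prod>a\<leftarrow>replicate s (1/2) @ [1 - real k]. pochhammer a i) / (\<Prod>b\<leftarrow>replicate s (3/2). pochhammer b i) * (-1) ^ i / fact i
     = real (k-1 choose i) / (2 * real i + 1) ^ s" for i
  proof -
    have g: "(-1)^i * pochhammer (1 - real k) i / fact i = real (k-1 choose i)"
      using gbinomial_pochhammer[of "real (k-1)" i] assms
      by (simp add: binomial_gbinomial of_nat_diff)
    have "(\<Prod>a\<leftarrow>replicate s (1/2) @ [1 - real k]. pochhammer a i) / (\<Prod>b\<leftarrow>replicate s (3/2). pochhammer b i) * (-1) ^ i / fact i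
      = (pochhammer (1/2::real) i / pochhammer (3/2) i) ^ s * ((-1)^i * pochhammer (1 - real k) i / fact i)"
      by (simp add: power_divide)
    also have "\<dots> = real (k-1 choose i) / (2 * real i + 1) ^ s"
      by (simp only: poch_half g) (simp add: power_divide)
    finally show ?thesis .
  qed
  show ?thesis unfolding hypergeom_def t
    using assms by (intro suminf_finite) (auto simp: binomial_eq_0)
qed

theorem corollary3p4:
  fixes n s :: nat
  assumes "n \<ge> 1" and "s \<ge> 1"
  shows "oddAltHarm n s =
    (\<Sum>k=1..n. (-1)^(k-1) * real (n choose k) *
       hypergeom (replicate s (1/2) @ [1 - real k]) (replicate s (3/2)) (-1))"
proof -
  define a where "a i = 1 / (2 * real i + 1) ^ s" for i
  have "(\<Sum>k=1..n. (-1)^(k-1) * real (n choose k) *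
       hypergeom (replicate s (1/2) @ [1 - real k]) (replicate s (3/2)) (-1))
     = (\<Sum>k=1..n. (-1)^(k-1) * real (n choose k) * (\<Sum>i<k. real (k-1 choose i) * a i))"
    by (intro sum.cong refl) (simp add: hyp a_def)
  also have "\<dots> = (\<Sum>j<n. (-1)^j * real (n choose Suc j) * (\<Sum>i<Suc j. real (j choose i) * a i))"
    using sum.shift_bounds_cl_Suc_ivl[of "\<lambda>k. (-1)^(k-1) * real (n choose k) * (\<Sum>i<k. real (k-1 choose i) * a i)" 0 "n-1"] assms
    by (simp add: atLeast0AtMost lessThan_Suc_atMost[symmetric])
  also have "\<dots> = (\<Sum>j<n. (-1)^j * real (n choose Suc j) * (\<Sum>i<n. real (j choose i) * a i))"
  proof (rule sum.cong[OF refl])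
    fix j assume "j \<in> {..<n}"
    then have "(\<Sum>i<Suc j. real (j choose i) * a i) = (\<Sum>i<n. real (j choose i) * a i)"
      by (intro sum.mono_neutral_left) (auto simp: binomial_eq_0)
    then show "(-1)^j * real (n choose Suc j) * (\<Sum>i<Suc j. real (j choose i) * a i) = (-1)^j * real (n choose Suc j) * (\<Sum>i<n. real (j choose i) * a i)"
      by simp
  qed
  also have "\<dots> = (\<Sum>i<n. a i * (\<Sum>j<n. (-1)^j * real (n choose Suc j) * real (j choose i)))"
  proof -
    have "(\<Sum>j<n. (-1)^j * real (n choose Suc j) * (\<Sum>i<n. real (j choose i) * a i))
       = (\<Sum>j<n. \<Sum>i<n. (-1)^j * real (n choose Suc j) * real (j choose i) * a i)"
      by (simp only: sum_distrib_left mult.assoc)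
    also have "\<dots> = (\<Sum>i<n. \<Sum>j<n. (-1)^j * real (n choose Suc j) * real (j choose i) * a i)"
      by (rule sum.swap)
    also have "\<dots> = (\<Sum>i<n. a i * (\<Sum>j<n. (-1)^j * real (n choose Suc j) * real (j choose i)))"
      by (simp only: sum_distrib_left mult.commute)
    finally show ?thesis .
  qed
  also have "\<dots> = (\<Sum>i<n. a i * (-1)^i)"
    by (intro sum.cong refl) (simp add: L2)
  also have "\<dots> = oddAltHarm n s"
    by (simp add: oddAltHarm_def a_def)
  finally show ?thesis ..
qed

end
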